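(* Let $d, n \in \mathbb{N}$, let $\Gamma_{\mathrm{noise}} \in \mathbb{R}^{n\times n}$ be symmetric positive definite, let ${\boldsymbol{y}} \in \mathbb{R}^n$, and let $F, \hat F : \mathbb{R}^d \to \mathbb{R}^n$ be differentiable maps (the "high-fidelity" forward map and its surrogate). Let $r\le d$ and $\Phi \in \mathbb{R}^{d\times r}$ with $\Phi^T\Phi = I_r$, and set $P_r = \Phi\Phi^T$. Define $$L({\boldsymbol{\eta}}) = \tfrac12 \|{\boldsymbol{y}} - F({\boldsymbol{\eta}})\|^2_{\Gamma_{\mathrm{noise}}^{-1}} + \tfrac12\|{\boldsymbol{\eta}}\|^2,\qquad \hat L({\boldsymbol{\eta}}) = \tfrac12 \|{\boldsymbol{y}} - \hat F({\boldsymbol{\eta}})\|^2_{\Gamma_{\mathrm{noise}}^{-1}} + \tfrac12\|\Phi^T{\boldsymbol{\eta}}\|^2,$$ where $\|{\boldsymbol{v}}\|^2_{A} = {\boldsymbol{v}}^TA{\boldsymbol{v}}$. Let ${\boldsymbol{\eta}}^*, \hat{\boldsymbol{\eta}}^* \in \mathbb{R}^d$ be stationary points, $\nabla L({\boldsymbol{\eta}}^* ) = 0$ and $\nabla \hat L(\hat{\boldsymbol{\eta}}^* ) = 0$, i.e. $$ -\nabla F({\boldsymbol{\eta}}^* )^T\Gamma_{\mathrm{noise}}^{-1}({\boldsymbol{y}}-F({\boldsymbol{\eta}}^* )) + {\boldsymbol{\eta}}^* = 0,\qquad -\nabla \hat F(\hat{\boldsymbol{\eta}}^* )^T\Gamma_{\mathrm{noise}}^{-1}({\boldsymbol{y}}-\hat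 F(\hat{\boldsymbol{\eta}}^* )) + P_r\hat{\boldsymbol{\eta}}^* = 0,$$ and assume $\hat{\boldsymbol{\eta}}^*$ lies in the range of $\Phi$, i.e. $P_r\hat{\boldsymbol{\eta}}^* = \hat{\boldsymbol{\eta}}^*$. Suppose there is a radius $R>0$ such that: (A1) $L$ and $\hat L$ are twice differentiable at ${\boldsymbol{\eta}}^*$ and $\hat{\boldsymbol{\eta}}^*$ respectively, and there exist matrix-valued functions $\delta, \hat\delta$ with values in $\mathbb{R}^{d\times d}$, $\lim_{{\boldsymbol{\eta}}\to{\boldsymbol{\eta}}^*}\|\delta({\boldsymbol{\eta}})\| = 0$, $\lim_{{\boldsymbol{\eta}}\to\hat{\boldsymbol{\eta}}^*}\|\hat\delta({\boldsymbol{\eta}})\|=0$, such that $\nabla L({\boldsymbol{\eta}}) = \nabla L({\boldsymbol{\eta}}^* ) + \nabla^2 L({\boldsymbol{\eta}}^* )({\boldsymbol{\eta}}-{\boldsymbol{\eta}}^* ) + \delta({\boldsymbol{\eta}})({\boldsymbol{\eta}}-{\boldsymbol{\eta}}^* )$ whenever $\|{\boldsymbol{\eta}}-{\boldsymbol{\eta}}^*\|\le R$, and $\nabla \hat L({\boldsymbol{\eta}}) = \nabla \hat L(\hat{\boldsymbol{\eta}}^* ) + \nabla^2 \hat L(\hat{\boldsymbol{\eta}}^* )({\boldsymbol{\eta}}-\hat{\boldsymbol{\eta}}^* ) + \hat\delta({\boldsymbol{\eta}})({\boldsymbol{\eta}}-\hat{\boldsymbol{\eta}}^* )$ whenever $\|{\boldsymbol{\eta}}-\hat{\boldsymbol{\eta}}^*\|\le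 R$; moreover, for some constant $c_h>0$, $$\big\|(\nabla^2\hat L(\hat{\boldsymbol{\eta}}^* ) + \nabla^2 L({\boldsymbol{\eta}}^* ))({\boldsymbol{\eta}}^*-\hat{\boldsymbol{\eta}}^* ) + (\hat\delta({\boldsymbol{\eta}}^* )+\delta(\hat{\boldsymbol{\eta}}^* ))({\boldsymbol{\eta}}^*-\hat{\boldsymbol{\eta}}^* )\big\| \ge c_h\|{\boldsymbol{\eta}}^*-\hat{\boldsymbol{\eta}}^*\|.$$ (A2) There are constants $\varepsilon_1,\varepsilon_2>0$ with $\|F({\boldsymbol{\eta}}) - \hat F({\boldsymbol{\eta}})\| \le \varepsilon_1$ and $\|\nabla F({\boldsymbol{\eta}}) - \nabla\hat F({\boldsymbol{\eta}})\|\le\varepsilon_2$ for all ${\boldsymbol{\eta}}$ with $\|{\boldsymbol{\eta}}-{\boldsymbol{\eta}}^*\|\le R$ or $\|{\boldsymbol{\eta}}-\hat{\boldsymbol{\eta}}^*\|\le R$ (in particular at ${\boldsymbol{\eta}}^*$ and $\hat{\boldsymbol{\eta}}^*$). (A3) There is a constant $\varepsilon_3>0$ with $\|(I-P_r){\boldsymbol{\eta}}^*\|\le\varepsilon_3$. If $\|{\boldsymbol{\eta}}^*-\hat{\boldsymbol{\eta}}^*\|\le R$, then $$\|{\boldsymbol{\eta}}^*-\hat{\boldsymbol{\eta}}^*\| \le c_1\varepsilon_1 + c_2\varepsilon_2 + c_3\varepsilon_3 =: \varepsilon_{\boldsymbol{m}},$$ with $c_1 = \|\Gamma_{\mathrm{noise}}^{-1}\|\big(\|\nabla\hat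 F({\boldsymbol{\eta}}^* )\| + \|\nabla F(\hat{\boldsymbol{\eta}}^* )\|\big)/c_h$, $c_2 = \|\Gamma_{\mathrm{noise}}^{-1}\|\big(2\|{\boldsymbol{y}}\| + \|F({\boldsymbol{\eta}}^* )\| + \|\hat F(\hat{\boldsymbol{\eta}}^* )\|\big)/c_h$, $c_3 = 1/c_h$, which are independent of $\varepsilon_1,\varepsilon_2,\varepsilon_3$.
   Context: Norms: $\|\cdot\|$ denotes the Euclidean norm for vectors and the Frobenius norm for matrices. $\nabla F({\boldsymbol{\eta}})\in\mathbb{R}^{n\times d}$ denotes the Jacobian. Interpretation (not needed for the statement): ${\boldsymbol{\eta}}$ is the whitened parameter, ${\boldsymbol{m}} = {\boldsymbol{m}}_{\mathrm{prior}} + \Gamma_{\mathrm{prior}}^{1/2}{\boldsymbol{\eta}}$, $L$ is the negative log-posterior whose minimizer is the MAP point, and $\hat L$ is its surrogate counterpart using a neural network $\hat F$ that depends on ${\boldsymbol{\eta}}$ only through $\Phi^T{\boldsymbol{\eta}}$; the bound equals $\|{\boldsymbol{m}}^*-\hat{\boldsymbol{m}}^*\|_{\Gamma_{\mathrm{prior}}^{-1}}$. *)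

theory Defs
  imports "HOL-Analysis.Analysis"
begin

definition jacobian :: "(real^'d \<Rightarrow> real^'n) \<Rightarrow> real^'d \<Rightarrow> real^'d^'n" where
  "jacobian f x = matrix (frechet_derivative f (at x))"

definition grad :: "(real^'d \<Rightarrow> real) \<Rightarrow> real^'d \<Rightarrow> real^'d" where
  "grad f x = (\<chi> i. frechet_derivative f (at x) (axis i 1))"

definition hess :: "(real^'d \<Rightarrow> real) \<Rightarrow> real^'d \<Rightarrow> real^'d^'d" where
  "hess f x = jacobian (grad f) x"

definition wnorm2 :: "real^'n^'n \<Rightarrow> real^'n \<Rightarrow> real" where
  "wnorm2 A v = v \<bullet> (A *v v)"

end

theory Submission
  imports Defs
begin

lemma inner_mv: "(u::real^'m) \<bullet> (M *v w) = (transpose M *v u) \<bullet> (w::real^'n)"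
  by (simp add: dot_lmul_matrix)

lemma grad_eqI:
  assumes "(f has_derivative (\<lambda>h. g \<bullet> h)) (at x)"
  shows "grad f x = g"
proof -
  have "frechet_derivative f (at x) = (\<lambda>h. g \<bullet> h)"
    using frechet_derivative_at[OF assms] by simp
  then show ?thesis unfolding grad_def by (simp add: vec_eq_iff cart_eq_inner_axis[symmetric])
qed

lemma jac_deriv:
  assumes "F differentiable (at x)"
  shows "(F has_derivative (\<lambda>h. jacobian F x *v h)) (at x)"
proof -
  have d: "(F has_derivative frechet_derivative F (at x)) (at x)"
    using assms frechet_derivative_works by blast
  then have "linear (frechet_derivative F (at x))"
    using has_derivative_linear by blast
  then have "(\<lambda>h. jacobian F x *v h) = frechet_derivative F (at x)"
    unfolding jacobian_def using matrix_vector_mul(2) by metis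
  then show ?thesis using d by simp
qed

lemma grad_formula:
  fixes A :: "real^'n^'n" and B :: "real^'d^'m" and F :: "real^'d \<Rightarrow> real^'n"
  assumes As: "transpose A = A" and Fd: "F differentiable (at x)"
    and Ld: "\<forall>x. Lf x = 1/2 * wnorm2 A (y - F x) + 1/2 * (norm (B *v x))^2"
  shows "grad Lf x = - (transpose (jacobian F x) *v (A *v (y - F x))) + (transpose B ** B) *v x"
proof (rule grad_eqI)
  define J where "J = jacobian F x"
  have dF: "(F has_derivative (\<lambda>h. J *v h)) (at x)" unfolding J_def by (rule jac_deriv[OF Fd])
  have dv: "((\<lambda>x. y - F x) has_derivative (\<lambda>h. - (J *v h))) (at x)"
    using has_derivative_diff[OF has_derivative_const dF, of y] by simp
  have dAv: "((\<lambda>x. A *v (y - F x)) has_derivative (\<lambda>h. A *v (- (J *v h)))) (at x)"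
    using bounded_linear.has_derivative[OF matrix_vector_mul_bounded_linear dv] .
  have dw: "((\<lambda>x. (y - F x) \<bullet> (A *v (y - F x))) has_derivative
      (\<lambda>h. (y - F x) \<bullet> (A *v (- (J *v h))) + (- (J *v h)) \<bullet> (A *v (y - F x)))) (at x)"
    using has_derivative_inner[OF dv dAv] .
  have dB: "((\<lambda>x. B *v x) has_derivative (\<lambda>h. B *v h)) (at x)"
    by (rule bounded_linear_imp_has_derivative[OF matrix_vector_mul_bounded_linear])
  have dn: "((\<lambda>x. (B *v x) \<bullet> (B *v x)) has_derivative
      (\<lambda>h. (B *v x) \<bullet> (B *v h) + (B *v h) \<bullet> (B *v x))) (at x)"
    using has_derivative_inner[OF dB dB] .
  have Leq: "Lf = (\<lambda>x. 1/2 * ((y - F x) \<bullet> (A *v (y - F x))) + 1/2 * ((B *v x) \<bullet> (B *v x)))"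
    using Ld by (auto simp: wnorm2_def power2_norm_eq_inner)
  have dL: "(Lf has_derivative (\<lambda>h. 1/2 * ((y - F x) \<bullet> (A *v (- (J *v h))) + (- (J *v h)) \<bullet> (A *v (y - F x)))
        + 1/2 * ((B *v x) \<bullet> (B *v h) + (B *v h) \<bullet> (B *v x)))) (at x)"
    unfolding Leq by (intro has_derivative_add has_derivative_mult_right dw dn)
  show "(Lf has_derivative (\<lambda>h. (- (transpose (jacobian F x) *v (A *v (y - F x))) + (transpose B ** B) *v x) \<bullet> h)) (at x)"
  proof (rule has_derivative_eq_rhs[OF dL], rule ext)
    fix h
    have e1: "(y - F x) \<bullet> (A *v (- (J *v h))) = - ((transpose J *v (A *v (y - F x))) \<bullet> h)"
    proof -
      have n: "A *v (- (J *v h)) = - (A *v (J *v h))"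
        by (simp add: vec_eq_iff matrix_vector_mult_def sum_negf)
      have "(y - F x) \<bullet> (A *v (J *v h)) = (A *v (y - F x)) \<bullet> (J *v h)"
        using inner_mv[of "y - F x" A "J *v h"] by (simp only: As)
      also have "\<dots> = (transpose J *v (A *v (y - F x))) \<bullet> h"
        by (rule inner_mv)
      finally show ?thesis using n by simp
    qed
    have e2: "(- (J *v h)) \<bullet> (A *v (y - F x)) = - ((transpose J *v (A *v (y - F x))) \<bullet> h)"
    proof -
      have "(J *v h) \<bullet> (A *v (y - F x)) = (A *v (y - F x)) \<bullet> (J *v h)" by (rule inner_commute)
      also have "\<dots> = (transpose J *v (A *v (y - F x))) \<bullet> h" by (rule inner_mv)
      finally show ?thesis by (simp only: inner_minus_left)
    qed
    have e3: "(B *v x) \<bullet> (B *v h) = ((transpose B ** B) *v x) \<bullet> h"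
      using inner_mv[of "B *v x" B h] by (simp only: matrix_vector_mul_assoc)
    have e4: "(B *v h) \<bullet> (B *v x) = ((transpose B ** B) *v x) \<bullet> h"
      using e3 inner_commute[of "B *v h" "B *v x"] by (simp only:)
    have "1/2 * ((y - F x) \<bullet> (A *v (- (J *v h))) + (- (J *v h)) \<bullet> (A *v (y - F x)))
        + 1/2 * ((B *v x) \<bullet> (B *v h) + (B *v h) \<bullet> (B *v x)) =
        (- (transpose J *v (A *v (y - F x))) + (transpose B ** B) *v x) \<bullet> h"
      by (simp only: e1 e2 e3 e4 inner_add_left inner_minus_left) (use inner_mv[of "A *v (y - F x)" J h] inner_commute[of "J *v h" "A *v (y - F x)"] in simp)
    then show "1/2 * ((y - F x) \<bullet> (A *v (- (J *v h))) + (- (J *v h)) \<bullet> (A *v (y - F x)))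
        + 1/2 * ((B *v x) \<bullet> (B *v h) + (B *v h) \<bullet> (B *v x)) =
        (- (transpose (jacobian F x) *v (A *v (y - F x))) + (transpose B ** B) *v x) \<bullet> h"
      by (simp only: J_def)
  qed
qed


lemma div_split: "((a::real)*e1 + b*e2 + e3)/c = a/c*e1 + b/c*e2 + 1/c*e3"
  by (simp add: add_divide_distrib)

lemma mv_neg: "(M::real^'n^'m) *v (- v) = - (M *v v)"
  by (simp add: vec_eq_iff matrix_vector_mult_def sum_negf)

lemma norm_sq_vec: "(norm (v::real^'n))^2 = (\<Sum>i\<in>UNIV. (v$i)^2)"
  by (simp add: norm_vec_def L2_set_def sum_nonneg)

lemma norm_sq_mat: "(norm (A::real^'n^'m))^2 = (\<Sum>i\<in>UNIV. (norm (A$i))^2)"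
  by (simp add: norm_vec_def L2_set_def sum_nonneg)

lemma norm_mv_le: "norm ((A::real^'n^'m) *v x) \<le> norm A * norm x"
proof -
  have row: "(A *v x)$i = A$i \<bullet> x" for i by (simp add: matrix_vector_mult_def inner_vec_def)
  have "(norm (A *v x))^2 = (\<Sum>i\<in>UNIV. (A$i \<bullet> x)^2)" by (simp add: norm_sq_vec row)
  also have "\<dots> \<le> (\<Sum>i\<in>UNIV. (norm (A$i))^2 * (norm x)^2)"
  proof (rule sum_mono)
    fix i
    have "\<bar>A$i \<bullet> x\<bar> \<le> norm (A$i) * norm x" using Cauchy_Schwarz_ineq2[of "A$i" x] by simp
    then have "\<bar>A$i \<bullet> x\<bar>^2 \<le> (norm (A$i) * norm x)^2" by (rule power_mono) simp
    then show "(A$i \<bullet> x)^2 \<le> (norm (A$i))^2 * (norm x)^2"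
      by (simp add: power_mult_distrib)
  qed
  also have "\<dots> = (norm A * norm x)^2" by (simp add: norm_sq_mat power_mult_distrib sum_distrib_right)
  finally show ?thesis by (rule power2_le_imp_le) simp
qed

lemma norm_transpose: "norm (transpose (A::real^'n^'m)) = norm A"
proof -
  have "(norm (transpose A))^2 = (norm A)^2"
    unfolding norm_sq_mat norm_sq_vec by (simp add: transpose_def) (rule sum.swap)
  then show ?thesis by (simp add: power2_eq_iff_nonneg)
qed

lemma transpose_diff: "transpose ((A::real^'n^'m) - B) = transpose A - transpose B"
  by (simp add: transpose_def vec_eq_iff)

lemma sym_inv:
  fixes G :: "real^'n^'n"
  assumes sym: "transpose G = G" and pd: "\<forall>v. v \<noteq> 0 \<longrightarrow> v \<bullet> (G *v v) > 0"
  shows "transpose (matrix_inv G) = matrix_inv G"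
proof -
  have "\<forall>x. G *v x = 0 \<longrightarrow> x = 0"
  proof (intro allI impI, rule ccontr)
    fix x assume a: "G *v x = 0" "x \<noteq> 0"
    then have "x \<bullet> (G *v x) > 0" using pd by blast
    then show False using a by simp
  qed
  then have "invertible G" unfolding invertible_left_inverse matrix_left_invertible_ker .
  then have "\<exists>M. G ** M = mat 1 \<and> M ** G = mat 1" unfolding invertible_def .
  then have M: "G ** matrix_inv G = mat 1 \<and> matrix_inv G ** G = mat 1"
    unfolding matrix_inv_def by (rule someI_ex)
  define M where "M = matrix_inv G"
  have "transpose (M ** G) = mat 1" using M M_def by simp
  then have T: "G ** transpose M = mat 1" by (simp add: matrix_transpose_mul sym)
  have "M = M ** (G ** transpose M)" by (simp add: T)
  also have "\<dots> = transpose M" by (simp add: matrix_mul_assoc M M_def)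
  finally show ?thesis using M_def by simp
qed


theorem theorem1:
  fixes Gam :: "real^'n^'n" and y :: "real^'n"
    and F Fh :: "real^'d \<Rightarrow> real^'n"
    and Phi :: "real^'r^'d"
    and L Lh :: "real^'d \<Rightarrow> real"
    and es eh :: "real^'d"
    and R ch eps1 eps2 eps3 :: real
    and \<delta> \<delta>h :: "real^'d \<Rightarrow> real^'d^'d"
  assumes Gam_sym: "transpose Gam = Gam"
    and Gam_pd: "\<forall>v. v \<noteq> 0 \<longrightarrow> v \<bullet> (Gam *v v) > 0"
    and F_diff: "\<forall>x. F differentiable (at x)"
    and Fh_diff: "\<forall>x. Fh differentiable (at x)"
    and r_le_d: "CARD('r) \<le> CARD('d)"
    and Phi_orth: "transpose Phi ** Phi = mat 1"
    and L_def: "\<forall>x. L x = 1/2 * wnorm2 (matrix_inv Gam) (y - F x) + 1/2 * (norm x)\<^sup>2"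
    and Lh_def: "\<forall>x. Lh x = 1/2 * wnorm2 (matrix_inv Gam) (y - Fh x)
                              + 1/2 * (norm (transpose Phi *v x))\<^sup>2"
    and stat: "grad L es = 0"
    and stat_h: "grad Lh eh = 0"
    and eh_range: "(Phi ** transpose Phi) *v eh = eh"
    and R_pos: "R > 0"
    and L_twice: "grad L differentiable (at es)"
    and Lh_twice: "grad Lh differentiable (at eh)"
    and \<delta>_lim: "((\<lambda>x. norm (\<delta> x)) \<longlongrightarrow> 0) (at es)"
    and \<delta>h_lim: "((\<lambda>x. norm (\<delta>h x)) \<longlongrightarrow> 0) (at eh)"
    and L_exp: "\<forall>x. norm (x - es) \<le> R \<longrightarrow>
        grad L x = grad L es + hess L es *v (x - es) + \<delta> x *v (x - es)"
    and Lh_exp: "\<forall>x. norm (x - eh) \<le> R \<longrightarrow>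
        grad Lh x = grad Lh eh + hess Lh eh *v (x - eh) + \<delta>h x *v (x - eh)"
    and ch_pos: "ch > 0"
    and A1_lower: "norm ((hess Lh eh + hess L es) *v (es - eh) + (\<delta>h es + \<delta> eh) *v (es - eh))
                     \<ge> ch * norm (es - eh)"
    and eps_pos: "eps1 > 0" "eps2 > 0" "eps3 > 0"
    and A2: "\<forall>x. norm (x - es) \<le> R \<or> norm (x - eh) \<le> R \<longrightarrow>
        norm (F x - Fh x) \<le> eps1 \<and> norm (jacobian F x - jacobian Fh x) \<le> eps2"
    and A3: "norm ((mat 1 - Phi ** transpose Phi) *v es) \<le> eps3"
    and close: "norm (es - eh) \<le> R"
  shows "norm (es - eh) \<le>
      norm (matrix_inv Gam) * (norm (jacobian Fh es) + norm (jacobian F eh)) / ch * eps1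
    + norm (matrix_inv Gam) * (2 * norm y + norm (F es) + norm (Fh eh)) / ch * eps2
    + 1 / ch * eps3"
proof -
  define A where "A = matrix_inv Gam"
  define P where "P = Phi ** transpose Phi"
  have As: "transpose A = A" unfolding A_def by (rule sym_inv[OF Gam_sym Gam_pd])
  have gL: "grad L x = - (transpose (jacobian F x) *v (A *v (y - F x))) + x" for x
  proof -
    have "\<forall>x. L x = 1/2 * wnorm2 A (y - F x) + 1/2 * (norm ((mat 1 :: real^'d^'d) *v x))\<^sup>2"
      using L_def A_def by simp
    from grad_formula[OF As F_diff[rule_format] this] show ?thesis by simp
  qed
  have gLh: "grad Lh x = - (transpose (jacobian Fh x) *v (A *v (y - Fh x))) + P *v x" for x
  proof -
    have "\<forall>x. Lh x = 1/2 * wnorm2 A (y - Fh x) + 1/2 * (norm (transpose Phi *v x))\<^sup>2"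
      using Lh_def A_def by simp
    from grad_formula[OF As Fh_diff[rule_format] this] show ?thesis by (simp add: P_def)
  qed
  define D where "D = grad Lh es - grad L eh"
  have close': "norm (eh - es) \<le> R" using close by (simp add: norm_minus_commute)
  have e1: "grad Lh es = hess Lh eh *v (es - eh) + \<delta>h es *v (es - eh)"
    using Lh_exp close stat_h by simp
  have e2: "grad L eh = hess L es *v (eh - es) + \<delta> eh *v (eh - es)"
    using L_exp close' stat by simp
  have ee: "eh - es = - (es - eh)" by simp
  have Dexp: "D = (hess Lh eh + hess L es) *v (es - eh) + (\<delta>h es + \<delta> eh) *v (es - eh)"
    unfolding D_def e1 e2 ee mv_neg by (simp add: matrix_vector_mult_add_rdistrib)
  define J1 where "J1 = jacobian F es"
  define Jh1 where "Jh1 = jacobian Fh es"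
  define J2 where "J2 = jacobian F eh"
  define Jh2 where "Jh2 = jacobian Fh eh"
  define T1 where "T1 = grad Lh es - grad L es"
  define T2 where "T2 = grad Lh eh - grad L eh"
  have DT: "D = T1 + T2" unfolding D_def T1_def T2_def using stat stat_h by simp
  have T1eq: "T1 = (transpose J1 - transpose Jh1) *v (A *v (y - F es))
       + transpose Jh1 *v (A *v (Fh es - F es)) - (es - P *v es)"
    unfolding T1_def gL gLh J1_def Jh1_def by (simp add: algebra_simps)
  have T2eq: "T2 = (transpose J2 - transpose Jh2) *v (A *v (y - Fh eh))
       + transpose J2 *v (A *v (Fh eh - F eh))"
  proof -
    have "P *v eh = eh" using eh_range P_def by simp
    then show ?thesis
      unfolding T2_def gL gLh J2_def Jh2_def by (simp add: algebra_simps)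
  qed
  have A2es: "norm (F es - Fh es) \<le> eps1 \<and> norm (J1 - Jh1) \<le> eps2"
    using A2 R_pos unfolding J1_def Jh1_def by auto
  have A2eh: "norm (F eh - Fh eh) \<le> eps1 \<and> norm (J2 - Jh2) \<le> eps2"
    using A2 R_pos unfolding J2_def Jh2_def by auto
  have mm: "norm (M *v (N *v v)) \<le> norm M * (norm N * norm v)"
    for M :: "real^'n^'d" and N :: "real^'n^'n" and v
  proof -
    have "norm (M *v (N *v v)) \<le> norm M * norm (N *v v)" by (rule norm_mv_le)
    also have "\<dots> \<le> norm M * (norm N * norm v)"
      by (rule mult_left_mono[OF norm_mv_le]) simp
    finally show ?thesis .
  qed
  have Pes: "es - P *v es = (mat 1 - P) *v es" by (simp add: matrix_vector_mult_diff_rdistrib)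
  have nA: "norm A \<ge> 0" by simp
  have b1: "norm ((transpose J1 - transpose Jh1) *v (A *v (y - F es))) \<le> eps2 * (norm A * (norm y + norm (F es)))"
  proof -
    have "norm ((transpose J1 - transpose Jh1) *v (A *v (y - F es)))
        \<le> norm (J1 - Jh1) * (norm A * norm (y - F es))"
      using mm[of "transpose J1 - transpose Jh1" A "y - F es"] by (simp add: transpose_diff[symmetric] norm_transpose)
    also have "\<dots> \<le> eps2 * (norm A * (norm y + norm (F es)))"
      using A2es eps_pos by (intro mult_mono mult_left_mono norm_triangle_ineq4) (auto intro: mult_nonneg_nonneg)
    finally show ?thesis .
  qed
  have b2: "norm (transpose Jh1 *v (A *v (Fh es - F es))) \<le> norm Jh1 * (norm A * eps1)"
  proof -
    have "norm (transpose Jh1 *v (A *v (Fh es - F es))) \<le> norm Jh1 * (norm A * norm (Fh es - F es))"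
      using mm[of "transpose Jh1" A "Fh es - F es"] by (simp add: norm_transpose)
    also have "\<dots> \<le> norm Jh1 * (norm A * eps1)"
      using A2es by (intro mult_left_mono) (auto simp: norm_minus_commute)
    finally show ?thesis .
  qed
  have b3: "norm ((transpose J2 - transpose Jh2) *v (A *v (y - Fh eh))) \<le> eps2 * (norm A * (norm y + norm (Fh eh)))"
  proof -
    have "norm ((transpose J2 - transpose Jh2) *v (A *v (y - Fh eh)))
        \<le> norm (J2 - Jh2) * (norm A * norm (y - Fh eh))"
      using mm[of "transpose J2 - transpose Jh2" A "y - Fh eh"] by (simp add: transpose_diff[symmetric] norm_transpose)
    also have "\<dots> \<le> eps2 * (norm A * (norm y + norm (Fh eh)))"
      using A2eh eps_pos by (intro mult_mono mult_left_mono norm_triangle_ineq4) (auto intro: mult_nonneg_nonneg)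
    finally show ?thesis .
  qed
  have b4: "norm (transpose J2 *v (A *v (Fh eh - F eh))) \<le> norm J2 * (norm A * eps1)"
  proof -
    have "norm (transpose J2 *v (A *v (Fh eh - F eh))) \<le> norm J2 * (norm A * norm (Fh eh - F eh))"
      using mm[of "transpose J2" A "Fh eh - F eh"] by (simp add: norm_transpose)
    also have "\<dots> \<le> norm J2 * (norm A * eps1)"
      using A2eh by (intro mult_left_mono) (auto simp: norm_minus_commute)
    finally show ?thesis .
  qed
  have b5: "norm (es - P *v es) \<le> eps3" using A3 Pes P_def by simp
  have nT1: "norm T1 \<le> eps2 * (norm A * (norm y + norm (F es))) + norm Jh1 * (norm A * eps1) + eps3"
    unfolding T1eq using b1 b2 b5 norm_triangle_ineq4 norm_triangle_ineq
    by (smt (verit))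
  have nT2: "norm T2 \<le> eps2 * (norm A * (norm y + norm (Fh eh))) + norm J2 * (norm A * eps1)"
    unfolding T2eq using b3 b4 norm_triangle_ineq by (smt (verit))
  define S where "S = norm A * (norm Jh1 + norm J2) * eps1
     + norm A * (2 * norm y + norm (F es) + norm (Fh eh)) * eps2 + eps3"
  have "ch * norm (es - eh) \<le> norm D" using A1_lower Dexp by simp
  also have "\<dots> \<le> norm T1 + norm T2" unfolding DT by (rule norm_triangle_ineq)
  also have "\<dots> \<le> S" using nT1 nT2 unfolding S_def by (simp add: algebra_simps)
  finally have "ch * norm (es - eh) \<le> S" .
  then have "norm (es - eh) \<le> S / ch" using ch_pos by (simp add: pos_le_divide_eq mult.commute)
  also have "S / ch = norm (matrix_inv Gam) * (norm (jacobian Fh es) + norm (jacobian F eh)) / ch * eps1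
    + norm (matrix_inv Gam) * (2 * norm y + norm (F es) + norm (Fh eh)) / ch * eps2
    + 1 / ch * eps3"
    unfolding S_def A_def Jh1_def J2_def by (rule div_split)
  finally show ?thesis .
qed

end
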